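(* Let $\mathcal{I}$ be an interval hypergraph on $[n]$ and $A$ an acyclic orientation of $\mathcal{I}$. Then the fiber $\{\pi:\mathrm{Or}_\pi=A\}$ is an interval $[\sigma,\tau]$ of the weak order on permutations of $[n]$, where $\sigma$ avoids the pattern $231$ and $\tau$ avoids the pattern $213$.
   Context: An interval hypergraph $\mathcal{I}$ on $[n]$ is a collection of intervals of $[n]$ containing all singletons. An orientation is a map $O:\mathcal{I}\to[n]$ with $O(I)\in I$; it is acyclic if there are no $H_1,\dots,H_k\in\mathcal{I}$, $k\ge2$, with $O(H_{i+1})\in H_i\setminus\{O(H_i)\}$ for $i\in[k-1]$ and $O(H_1)\in H_k\setminus\{O(H_k)\}$. For a permutation $\pi$ of $[n]$ in one-line notation, $\mathrm{Or}_\pi(I)=\pi(\min\{j:\pi(j)\in I\})$. *)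

theory Defs
  imports "HOL-Combinatorics.Permutations"
begin

definition is_interval :: "nat \<Rightarrow> nat set \<Rightarrow> bool" where
  "is_interval n I \<longleftrightarrow> (\<exists>a b. 1 \<le> a \<and> a \<le> b \<and> b \<le> n \<and> I = {a..b})"

definition interval_hypergraph :: "nat \<Rightarrow> nat set set \<Rightarrow> bool" where
  "interval_hypergraph n \<I> \<longleftrightarrow>
     (\<forall>I\<in>\<I>. is_interval n I) \<and> (\<forall>i\<in>{1..n}. {i} \<in> \<I>)"

definition orientation :: "nat set set \<Rightarrow> (nat set \<Rightarrow> nat) \<Rightarrow> bool" where
  "orientation \<I> Ori \<longleftrightarrow> (\<forall>I\<in>\<I>. Ori I \<in> I)"

definition acyclic_orientation :: "nat set set \<Rightarrow> (nat set \<Rightarrow> nat) \<Rightarrow> bool" where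
  "acyclic_orientation \<I> Ori \<longleftrightarrow> orientation \<I> Ori \<and>
     \<not> (\<exists>k::nat. \<exists>H::nat \<Rightarrow> nat set. k \<ge> 2 \<and> (\<forall>i\<in>{1..k}. H i \<in> \<I>) \<and>
          (\<forall>i\<in>{1..<k}. Ori (H (i+1)) \<in> H i - {Ori (H i)}) \<and>
          Ori (H 1) \<in> H k - {Ori (H k)})"

text \<open>Permutations of [n] in one-line notation: \<pi>(1) ... \<pi>(n).
  Or_\<pi>(I) = \<pi>(min {j. \<pi>(j) \<in> I}).\<close>
definition Or_perm :: "(nat \<Rightarrow> nat) \<Rightarrow> nat set \<Rightarrow> nat" where
  "Or_perm \<pi> I = \<pi> (LEAST j. \<pi> j \<in> I)"

definition inv_set :: "nat \<Rightarrow> (nat \<Rightarrow> nat) \<Rightarrow> (nat \<times> nat) set" where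
  "inv_set n \<pi> = {(\<pi> j, \<pi> i) | i j. 1 \<le> i \<and> i < j \<and> j \<le> n \<and> \<pi> i > \<pi> j}"

definition weak_le :: "nat \<Rightarrow> (nat \<Rightarrow> nat) \<Rightarrow> (nat \<Rightarrow> nat) \<Rightarrow> bool" where
  "weak_le n \<sigma> \<pi> \<longleftrightarrow> inv_set n \<sigma> \<subseteq> inv_set n \<pi>"

definition avoids_231 :: "nat \<Rightarrow> (nat \<Rightarrow> nat) \<Rightarrow> bool" where
  "avoids_231 n \<sigma> \<longleftrightarrow> \<not> (\<exists>i j k. 1 \<le> i \<and> i < j \<and> j < k \<and> k \<le> n \<and>
       \<sigma> k < \<sigma> i \<and> \<sigma> i < \<sigma> j)"

definition avoids_213 :: "nat \<Rightarrow> (nat \<Rightarrow> nat) \<Rightarrow> bool" where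
  "avoids_213 n \<sigma> \<longleftrightarrow> \<not> (\<exists>i j k. 1 \<le> i \<and> i < j \<and> j < k \<and> k \<le> n \<and>
       \<sigma> j < \<sigma> i \<and> \<sigma> i < \<sigma> k)"

end

theory Submission
  imports Defs
begin

definition Rel :: "nat set set \<Rightarrow> (nat set \<Rightarrow> nat) \<Rightarrow> (nat \<times> nat) set" where
  "Rel \<I> A = {(A I, x) | I x. I \<in> \<I> \<and> x \<in> I \<and> x \<noteq> A I}"

lemma between_step:
  assumes hyp: "interval_hypergraph n \<I>" and ori: "orientation \<I> A"
    and xy: "(x, y) \<in> (Rel \<I> A)\<^sup>+"
  shows "\<forall>z. min x y < z \<and> z < max x y \<longrightarrow> (x, z) \<in> (Rel \<I> A)\<^sup>+"
  using xy
proof (induction rule: converse_trancl_induct)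
  case (base x)
  then obtain I where I: "I \<in> \<I>" "x = A I" "y \<in> I" "y \<noteq> A I" unfolding Rel_def by blast
  then obtain a b where ab: "I = {a..b}" using hyp unfolding interval_hypergraph_def is_interval_def by blast
  have xI: "x \<in> I" using ori I unfolding orientation_def by auto
  show ?case
  proof (intro allI impI)
    fix z assume z: "min x y < z \<and> z < max x y"
    have "z \<in> I" using z xI I(3) ab by auto
    moreover have "z \<noteq> A I" using z I(2) by auto
    ultimately have "(x, z) \<in> Rel \<I> A" using I unfolding Rel_def by blast
    then show "(x, z) \<in> (Rel \<I> A)\<^sup>+" by blast
  qed
next
  case (step x w)
  then obtain I where I: "I \<in> \<I>" "x = A I" "w \<in> I" "w \<noteq> A I" unfolding Rel_def by blast
  then obtain a b where ab: "I = {a..b}" using hyp unfolding interval_hypergraph_def is_interval_def by blast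
  have xI: "x \<in> I" using ori I unfolding orientation_def by auto
  have xw: "(x, w) \<in> (Rel \<I> A)\<^sup>+" using step(1) by blast
  show ?case
  proof (intro allI impI)
    fix z assume z: "min x y < z \<and> z < max x y"
    show "(x, z) \<in> (Rel \<I> A)\<^sup>+"
    proof (cases "min x w < z \<and> z < max x w")
      case True
      have "z \<in> I" using True xI I(3) ab by auto
      moreover have "z \<noteq> A I" using True I(2) by auto
      ultimately have "(x, z) \<in> Rel \<I> A" using I unfolding Rel_def by blast
      then show ?thesis by blast
    next
      case False
      show ?thesis
      proof (cases "z = w")
        case True then show ?thesis using xw by simp
      next
        case False2: False
        have "min w y < z \<and> z < max w y" using z False False2 by auto
        then have "(w, z) \<in> (Rel \<I> A)\<^sup>+" using step(3) by blast
        then show ?thesis using xw by (meson trancl_trans)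
      qed
    qed
  qed
qed

lemma chain_exists:
  assumes "(a, b) \<in> (Rel \<I> A)\<^sup>+"
  shows "\<exists>(k::nat) H. k \<ge> 1 \<and> (\<forall>i\<in>{1..k}. H i \<in> \<I>) \<and>
          (\<forall>i\<in>{1..<k}. A (H (i+1)) \<in> H i - {A (H i)}) \<and> A (H 1) = a \<and> b \<in> H k - {A (H k)}"
  using assms
proof (induction rule: trancl_induct)
  case (base y)
  then obtain I where I: "I \<in> \<I>" "a = A I" "y \<in> I" "y \<noteq> A I" unfolding Rel_def by blast
  show ?case by (rule exI[of _ 1], rule exI[of _ "\<lambda>_. I"]) (use I in auto)
next
  case (step y z)
  then obtain I where I: "I \<in> \<I>" "y = A I" "z \<in> I" "z \<noteq> A I" unfolding Rel_def by blast
  from step(3) obtain k :: nat and H where kH: "k \<ge> 1" "\<forall>i\<in>{1..k}. H i \<in> \<I>"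
     "\<forall>i\<in>{1..<k}. A (H (i+1)) \<in> H i - {A (H i)}" "A (H 1) = a" "y \<in> H k - {A (H k)}" by blast
  define H' where "H' = H(k+1 := I)"
  have "\<forall>i\<in>{1..k+1}. H' i \<in> \<I>" using kH(2) I(1) unfolding H'_def by auto
  moreover have "\<forall>i\<in>{1..<k+1}. A (H' (i+1)) \<in> H' i - {A (H' i)}"
  proof
    fix i assume i: "i \<in> {1..<k+1}"
    show "A (H' (i+1)) \<in> H' i - {A (H' i)}"
    proof (cases "i = k")
      case True then show ?thesis using kH(5) I(2) unfolding H'_def by simp
    next
      case False then show ?thesis using kH(3) i unfolding H'_def by auto
    qed
  qed
  moreover have "A (H' 1) = a" using kH(1,4) unfolding H'_def by auto
  moreover have "z \<in> H' (k+1) - {A (H' (k+1))}" using I unfolding H'_def by auto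
  ultimately show ?case by (intro exI[of _ "k+1"] exI[of _ H']) auto
qed

lemma P_irrefl:
  assumes "acyclic_orientation \<I> A"
  shows "(a, a) \<notin> (Rel \<I> A)\<^sup>+"
proof
  assume "(a, a) \<in> (Rel \<I> A)\<^sup>+"
  from chain_exists[OF this] obtain k :: nat and H where kH: "k \<ge> 1" "\<forall>i\<in>{1..k}. H i \<in> \<I>"
     "\<forall>i\<in>{1..<k}. A (H (i+1)) \<in> H i - {A (H i)}" "A (H 1) = a" "a \<in> H k - {A (H k)}" by blast
  show False
  proof (cases "k = 1")
    case True then show False using kH by auto
  next
    case False
    then have "k \<ge> 2" using kH(1) by auto
    then show False using assms kH unfolding acyclic_orientation_def by blast
  qed
qed


lemma perm_from_order:
  fixes L :: "(nat \<times> nat) set"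
  assumes irr: "\<forall>a\<in>{1..n}. (a,a) \<notin> L" and tr: "trans L"
    and tot: "\<forall>a\<in>{1..n}. \<forall>b\<in>{1..n}. a \<noteq> b \<longrightarrow> (a,b) \<in> L \<or> (b,a) \<in> L"
  shows "\<exists>\<pi>. \<pi> permutes {1..n} \<and> (\<forall>a\<in>{1..n}. \<forall>b\<in>{1..n}. (inv \<pi> a < inv \<pi> b) = ((a,b) \<in> L))"
proof -
  define S where "S = {1..n::nat}"
  define pos where "pos a = (if a \<in> S then Suc (card {c\<in>S. (c,a) \<in> L}) else a)" for a
  have mono: "pos a < pos b" if "a \<in> S" "b \<in> S" "(a,b) \<in> L" for a b
  proof -
    have "{c\<in>S. (c,a) \<in> L} \<subset> {c\<in>S. (c,b) \<in> L}"
    proof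
      show "{c\<in>S. (c,a) \<in> L} \<subseteq> {c\<in>S. (c,b) \<in> L}" using tr that by (auto dest: transD)
      show "{c\<in>S. (c,a) \<in> L} \<noteq> {c\<in>S. (c,b) \<in> L}" using that irr S_def by auto
    qed
    then have "card {c\<in>S. (c,a) \<in> L} < card {c\<in>S. (c,b) \<in> L}"
      by (intro psubset_card_mono) (auto simp: S_def)
    then show ?thesis using that by (simp add: pos_def)
  qed
  have range: "pos a \<in> S" if "a \<in> S" for a
  proof -
    have "{c\<in>S. (c,a) \<in> L} \<subseteq> S - {a}" using irr that S_def by auto
    then have "card {c\<in>S. (c,a) \<in> L} \<le> card (S - {a})" by (intro card_mono) (auto simp: S_def)
    also have "\<dots> = n - 1" using that by (simp add: S_def)
    finally show ?thesis using that by (auto simp: pos_def S_def)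
  qed
  have injp: "inj_on pos S"
  proof (rule inj_onI)
    fix a b assume "a \<in> S" "b \<in> S" "pos a = pos b"
    then show "a = b"
    proof (rule_tac ccontr)
      assume "a \<in> S" "b \<in> S" "pos a = pos b" "a \<noteq> b"
      then have "(a,b) \<in> L \<or> (b,a) \<in> L" using tot S_def by auto
      then show False using mono[of a b] mono[of b a] \<open>a \<in> S\<close> \<open>b \<in> S\<close> \<open>pos a = pos b\<close> by auto
    qed
  qed
  have "pos ` S \<subseteq> S" using range by auto
  then have "pos ` S = S" using endo_inj_surj[OF _ _ injp] by (simp add: S_def)
  then have "bij_betw pos S S" using injp by (simp add: bij_betw_def)
  then have pp: "pos permutes S" by (rule bij_imp_permutes) (simp add: pos_def)
  have "inv pos permutes S" using permutes_inv[OF pp] .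
  moreover have "inv (inv pos) = pos" using permutes_inv_inv[OF pp] .
  moreover have "\<forall>a\<in>S. \<forall>b\<in>S. (pos a < pos b) = ((a,b) \<in> L)"
  proof (intro ballI iffI)
    fix a b assume ab: "a \<in> S" "b \<in> S" "pos a < pos b"
    show "(a,b) \<in> L"
    proof (rule ccontr)
      assume "(a,b) \<notin> L"
      moreover have "a \<noteq> b" using ab by auto
      ultimately have "(b,a) \<in> L" using tot ab unfolding S_def by blast
      then show False using mono[of b a] ab by auto
    qed
  next
    fix a b assume "a \<in> S" "b \<in> S" "(a,b) \<in> L"
    then show "pos a < pos b" by (rule mono)
  qed
  ultimately show ?thesis unfolding S_def by (intro exI[of _ "inv pos"]) simp
qed

lemma inv_set_char:
  assumes "\<pi> permutes {1..n}"
  shows "inv_set n \<pi> = {(a,b). a \<in> {1..n} \<and> b \<in> {1..n} \<and> a < b \<and> inv \<pi> b < inv \<pi> a}"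
proof -
  have ip: "inv \<pi> permutes {1..n}" using permutes_inv[OF assms] .
  show ?thesis
  proof safe
    fix a b assume "(a,b) \<in> inv_set n \<pi>"
    then obtain i j where ij: "a = \<pi> j" "b = \<pi> i" "1 \<le> i" "i < j" "j \<le> n" "\<pi> i > \<pi> j"
      unfolding inv_set_def by blast
    have iS: "i \<in> {1..n}" "j \<in> {1..n}" using ij by auto
    have "\<pi> i \<in> {1..n}" "\<pi> j \<in> {1..n}" using iS permutes_in_image[OF assms] by blast+
    then show "a \<in> {1..n}" "b \<in> {1..n}" using ij(1,2) by simp_all
    show "a < b" using ij by simp
    show "inv \<pi> b < inv \<pi> a" using ij permutes_inverses(2)[OF assms] by simp
  next
    fix a b assume ab: "a \<in> {1..n}" "b \<in> {1..n}" "a < b" "inv \<pi> b < inv \<pi> a"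
    define i where "i = inv \<pi> b"
    define j where "j = inv \<pi> a"
    have "i \<in> {1..n}" using permutes_in_image[OF ip, of b] ab(2) unfolding i_def by blast
    moreover have "j \<in> {1..n}" using permutes_in_image[OF ip, of a] ab(1) unfolding j_def by blast
    moreover have "\<pi> i = b" "\<pi> j = a" using permutes_inverses(1)[OF assms] i_def j_def by auto
    moreover have "i < j" using ab i_def j_def by simp
    ultimately have "1 \<le> i \<and> i < j \<and> j \<le> n \<and> \<pi> i > \<pi> j \<and> (a,b) = (\<pi> j, \<pi> i)" using ab by auto
    then show "(a,b) \<in> inv_set n \<pi>" unfolding inv_set_def by blast
  qed
qed

lemma Or_perm_char:
  assumes p: "\<pi> permutes {1..n}" and I: "I \<subseteq> {1..n}" and aI: "A I \<in> I"
  shows "(Or_perm \<pi> I = A I) = (\<forall>x\<in>I - {A I}. inv \<pi> (A I) < inv \<pi> x)"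
proof -
  define j0 where "j0 = inv \<pi> (A I)"
  have pj0: "\<pi> j0 = A I" using permutes_inverses(1)[OF p] j0_def by simp
  have injp: "inj \<pi>" using permutes_inj[OF p] .
  show ?thesis
  proof
    assume h: "Or_perm \<pi> I = A I"
    then have "(LEAST j. \<pi> j \<in> I) = j0" using pj0 injp unfolding Or_perm_def by (metis injD)
    show "\<forall>x\<in>I - {A I}. inv \<pi> (A I) < inv \<pi> x"
    proof
      fix x assume x: "x \<in> I - {A I}"
      have "\<pi> (inv \<pi> x) = x" using permutes_inverses(1)[OF p] by simp
      then have "j0 \<le> inv \<pi> x" using \<open>(LEAST j. \<pi> j \<in> I) = j0\<close> x by (metis DiffD1 Least_le)
      moreover have "inv \<pi> x \<noteq> j0" using \<open>\<pi> (inv \<pi> x) = x\<close> pj0 x by auto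
      ultimately show "inv \<pi> (A I) < inv \<pi> x" using j0_def by simp
    qed
  next
    assume h: "\<forall>x\<in>I - {A I}. inv \<pi> (A I) < inv \<pi> x"
    have "(LEAST j. \<pi> j \<in> I) = j0"
    proof (rule Least_equality)
      show "\<pi> j0 \<in> I" using pj0 aI by simp
      fix j assume j: "\<pi> j \<in> I"
      show "j0 \<le> j"
      proof (cases "\<pi> j = A I")
        case True then show ?thesis using pj0 injp by (metis injD order_refl)
      next
        case False
        then have "inv \<pi> (A I) < inv \<pi> (\<pi> j)" using h j by auto
        then show ?thesis using permutes_inverses(2)[OF p] j0_def by simp
      qed
    qed
    then show "Or_perm \<pi> I = A I" using pj0 unfolding Or_perm_def by simp
  qed
qed


lemma trans_L1:
  fixes P :: "(nat \<times> nat) set"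
  assumes trP: "trans P" and irr: "\<And>a. (a,a) \<notin> P"
    and betw: "\<And>x y z. (x,y) \<in> P \<Longrightarrow> min x y < z \<Longrightarrow> z < max x y \<Longrightarrow> (x,z) \<in> P"
  shows "trans {(a,b). a \<in> S \<and> b \<in> S \<and> ((a,b) \<in> P \<or> (a < b \<and> (b,a) \<notin> P))}"
proof (rule transI)
  fix a b c
  assume 1: "(a,b) \<in> {(a,b). a \<in> S \<and> b \<in> S \<and> ((a,b) \<in> P \<or> (a < b \<and> (b,a) \<notin> P))}"
    and 2: "(b,c) \<in> {(a,b). a \<in> S \<and> b \<in> S \<and> ((a,b) \<in> P \<or> (a < b \<and> (b,a) \<notin> P))}"
  then have S3: "a \<in> S" "b \<in> S" "c \<in> S"
    and ab: "(a,b) \<in> P \<or> (a < b \<and> (b,a) \<notin> P)" and bc: "(b,c) \<in> P \<or> (b < c \<and> (c,b) \<notin> P)"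
    by auto
  show "(a,c) \<in> {(a,b). a \<in> S \<and> b \<in> S \<and> ((a,b) \<in> P \<or> (a < b \<and> (b,a) \<notin> P))}"
  proof (cases "(a,c) \<in> P")
    case True then show ?thesis using S3 by simp
  next
    case nac: False
  have asy: "\<And>x y. (x,y) \<in> P \<Longrightarrow> (y,x) \<notin> P" using trP irr by (metis transD)
  have "a < c \<and> (c,a) \<notin> P"
    using ab bc
  proof (elim disjE conjE)
    assume "(a,b) \<in> P" "(b,c) \<in> P" then show ?thesis using nac trP by (metis transD)
  next
    assume h: "(a,b) \<in> P" "b < c" "(c,b) \<notin> P"
    have nca: "(c,a) \<notin> P" using h trP by (metis transD)
    moreover have "a < c"
    proof (rule ccontr)
      assume "\<not> a < c"
      moreover have "a \<noteq> c" using h asy by auto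
      ultimately have "b < c" "c < a" using h by auto
      then have "(a,c) \<in> P" using betw[OF h(1), of c] by auto
      then show False using nac by simp
    qed
    ultimately show ?thesis by simp
  next
    assume h: "a < b" "(b,a) \<notin> P" "(b,c) \<in> P"
    have nca: "(c,a) \<notin> P" using h trP by (metis transD)
    moreover have "a < c"
    proof (rule ccontr)
      assume "\<not> a < c"
      moreover have "a \<noteq> c" using h by auto
      ultimately have "c < a" "a < b" using h by auto
      then have "(b,a) \<in> P" using betw[OF h(3), of a] by auto
      then show False using h by simp
    qed
    ultimately show ?thesis by simp
  next
    assume h: "a < b" "(b,a) \<notin> P" "b < c" "(c,b) \<notin> P"
    have "(c,a) \<notin> P"
    proof
      assume "(c,a) \<in> P"
      then have "(c,b) \<in> P" using betw[of c a b] h by auto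
      then show False using h by simp
    qed
    then show ?thesis using h by simp
  qed
  then show ?thesis using S3 by simp
  qed
qed

lemma trans_L2:
  fixes P :: "(nat \<times> nat) set"
  assumes trP: "trans P" and irr: "\<And>a. (a,a) \<notin> P"
    and betw: "\<And>x y z. (x,y) \<in> P \<Longrightarrow> min x y < z \<Longrightarrow> z < max x y \<Longrightarrow> (x,z) \<in> P"
  shows "trans {(a,b). a \<in> S \<and> b \<in> S \<and> ((a,b) \<in> P \<or> (b < a \<and> (b,a) \<notin> P))}"
proof (rule transI)
  fix a b c
  assume 1: "(a,b) \<in> {(a,b). a \<in> S \<and> b \<in> S \<and> ((a,b) \<in> P \<or> (b < a \<and> (b,a) \<notin> P))}"
    and 2: "(b,c) \<in> {(a,b). a \<in> S \<and> b \<in> S \<and> ((a,b) \<in> P \<or> (b < a \<and> (b,a) \<notin> P))}"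
  then have S3: "a \<in> S" "b \<in> S" "c \<in> S"
    and ab: "(a,b) \<in> P \<or> (b < a \<and> (b,a) \<notin> P)" and bc: "(b,c) \<in> P \<or> (c < b \<and> (c,b) \<notin> P)"
    by auto
  show "(a,c) \<in> {(a,b). a \<in> S \<and> b \<in> S \<and> ((a,b) \<in> P \<or> (b < a \<and> (b,a) \<notin> P))}"
  proof (cases "(a,c) \<in> P")
    case True then show ?thesis using S3 by simp
  next
    case nac: False
  have asy: "\<And>x y. (x,y) \<in> P \<Longrightarrow> (y,x) \<notin> P" using trP irr by (metis transD)
  have "c < a \<and> (c,a) \<notin> P"
    using ab bc
  proof (elim disjE conjE)
    assume "(a,b) \<in> P" "(b,c) \<in> P" then show ?thesis using nac trP by (metis transD)
  next
    assume h: "(a,b) \<in> P" "c < b" "(c,b) \<notin> P"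
    have nca: "(c,a) \<notin> P" using h trP by (metis transD)
    moreover have "c < a"
    proof (rule ccontr)
      assume "\<not> c < a"
      moreover have "a \<noteq> c" using h asy by auto
      ultimately have "c < b" "a < c" using h by auto
      then have "(a,c) \<in> P" using betw[OF h(1), of c] by auto
      then show False using nac by simp
    qed
    ultimately show ?thesis by simp
  next
    assume h: "b < a" "(b,a) \<notin> P" "(b,c) \<in> P"
    have nca: "(c,a) \<notin> P" using h trP by (metis transD)
    moreover have "c < a"
    proof (rule ccontr)
      assume "\<not> c < a"
      moreover have "a \<noteq> c" using h by auto
      ultimately have "a < c" "b < a" using h by auto
      then have "(b,a) \<in> P" using betw[OF h(3), of a] by auto
      then show False using h by simp
    qed
    ultimately show ?thesis by simp
  next
    assume h: "b < a" "(b,a) \<notin> P" "c < b" "(c,b) \<notin> P"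
    have "(c,a) \<notin> P"
    proof
      assume "(c,a) \<in> P"
      then have "(c,b) \<in> P" using betw[of c a b] h by auto
      then show False using h by simp
    qed
    then show ?thesis using h by simp
  qed
  then show ?thesis using S3 by simp
  qed
qed


theorem proposition3p10:
  fixes n :: nat and \<I> :: "nat set set" and A :: "nat set \<Rightarrow> nat"
  assumes "interval_hypergraph n \<I>"
    and "acyclic_orientation \<I> A"
  shows "\<exists>\<sigma> \<tau>. \<sigma> permutes {1..n} \<and> \<tau> permutes {1..n} \<and>
           {\<pi>. \<pi> permutes {1..n} \<and> (\<forall>I\<in>\<I>. Or_perm \<pi> I = A I)}
             = {\<pi>. \<pi> permutes {1..n} \<and> weak_le n \<sigma> \<pi> \<and> weak_le n \<pi> \<tau>} \<and>
           avoids_231 n \<sigma> \<and> avoids_213 n \<tau>"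
proof -
  note hyp = assms(1) and acyc = assms(2)
  have ori: "orientation \<I> A" using acyc unfolding acyclic_orientation_def by simp
  define S where "S = {1..n}"
  define R where "R = Rel \<I> A"
  define P where "P = R\<^sup>+"
  have IS: "I \<subseteq> S" if "I \<in> \<I>" for I
    using hyp that unfolding interval_hypergraph_def is_interval_def S_def by auto
  have AI: "A I \<in> I" if "I \<in> \<I>" for I using ori that unfolding orientation_def by auto
  have RS: "R \<subseteq> S \<times> S" unfolding R_def Rel_def using IS AI by blast
  have PS: "a \<in> S \<and> b \<in> S" if "(a,b) \<in> P" for a b
    using trancl_subset_Sigma[OF RS] that unfolding P_def by blast
  have trP: "trans P" unfolding P_def by (rule trans_trancl)
  have irr: "(a,a) \<notin> P" for a using P_irrefl[OF acyc] unfolding P_def R_def by blast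
  have asy: "(b,a) \<notin> P" if "(a,b) \<in> P" for a b using trP irr that by (metis transD)
  have betw: "(x,z) \<in> P" if "(x,y) \<in> P" "min x y < z" "z < max x y" for x y z
    using between_step[OF hyp ori, of x y] that unfolding P_def R_def by blast
  define L1 where "L1 = {(a,b). a \<in> S \<and> b \<in> S \<and> ((a,b) \<in> P \<or> (a < b \<and> (b,a) \<notin> P))}"
  define L2 where "L2 = {(a,b). a \<in> S \<and> b \<in> S \<and> ((a,b) \<in> P \<or> (b < a \<and> (b,a) \<notin> P))}"
  have trL1: "trans L1" unfolding L1_def by (rule trans_L1[OF trP irr betw])
  have irL1: "\<forall>a\<in>{1..n}. (a,a) \<notin> L1" using irr unfolding L1_def by auto
  have toL1: "\<forall>a\<in>{1..n}. \<forall>b\<in>{1..n}. a \<noteq> b \<longrightarrow> (a,b) \<in> L1 \<or> (b,a) \<in> L1"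
    unfolding L1_def S_def by auto
  from perm_from_order[OF irL1 trL1 toL1] obtain \<sigma> where sp0: "\<sigma> permutes {1..n}"
    and sL0: "\<forall>a\<in>{1..n}. \<forall>b\<in>{1..n}. (inv \<sigma> a < inv \<sigma> b) = ((a,b) \<in> L1)" by blast
  have sp: "\<sigma> permutes S" using sp0 unfolding S_def .
  have sL: "\<forall>a\<in>S. \<forall>b\<in>S. (inv \<sigma> a < inv \<sigma> b) = ((a,b) \<in> L1)" using sL0 unfolding S_def .
  have trL2: "trans L2" unfolding L2_def by (rule trans_L2[OF trP irr betw])
  have irL2: "\<forall>a\<in>{1..n}. (a,a) \<notin> L2" using irr unfolding L2_def by auto
  have toL2: "\<forall>a\<in>{1..n}. \<forall>b\<in>{1..n}. a \<noteq> b \<longrightarrow> (a,b) \<in> L2 \<or> (b,a) \<in> L2"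
    unfolding L2_def S_def by auto
  from perm_from_order[OF irL2 trL2 toL2] obtain \<tau> where tp0: "\<tau> permutes {1..n}"
    and tL0: "\<forall>a\<in>{1..n}. \<forall>b\<in>{1..n}. (inv \<tau> a < inv \<tau> b) = ((a,b) \<in> L2)" by blast
  have tp: "\<tau> permutes S" using tp0 unfolding S_def .
  have tL: "\<forall>a\<in>S. \<forall>b\<in>S. (inv \<tau> a < inv \<tau> b) = ((a,b) \<in> L2)" using tL0 unfolding S_def .
  define D where "D = {(a,b). a \<in> S \<and> b \<in> S \<and> a < b \<and> (b,a) \<in> P}"
  define T where "T = {(a,b). a \<in> S \<and> b \<in> S \<and> a < b \<and> (a,b) \<notin> P}"
  have s1: "(inv \<sigma> b < inv \<sigma> a) = ((b,a) \<in> P)" if "a \<in> S" "b \<in> S" "a < b" for a b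
  proof -
    have "(inv \<sigma> b < inv \<sigma> a) = ((b,a) \<in> L1)" using sL that by blast
    also have "\<dots> = ((b,a) \<in> P)" unfolding L1_def using that by auto
    finally show ?thesis .
  qed
  have t1: "(inv \<tau> b < inv \<tau> a) = ((a,b) \<notin> P)" if "a \<in> S" "b \<in> S" "a < b" for a b
  proof -
    have "(inv \<tau> b < inv \<tau> a) = ((b,a) \<in> L2)" using tL that by blast
    also have "\<dots> = ((b,a) \<in> P \<or> (a,b) \<notin> P)" unfolding L2_def using that by auto
    also have "\<dots> = ((a,b) \<notin> P)" using asy by blast
    finally show ?thesis .
  qed
  have invs: "inv_set n \<sigma> = D"
    unfolding inv_set_char[OF sp[unfolded S_def]] D_def
  proof (intro set_eqI iffI; clarify)
    fix a b assume "a \<in> {1..n}" "b \<in> {1..n}" "a < b" "inv \<sigma> b < inv \<sigma> a"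
    then show "a \<in> S \<and> b \<in> S \<and> a < b \<and> (b,a) \<in> P" using s1[of a b] unfolding S_def by simp
  next
    fix a b assume "a \<in> S" "b \<in> S" "a < b" "(b,a) \<in> P"
    then show "a \<in> {1..n} \<and> b \<in> {1..n} \<and> a < b \<and> inv \<sigma> b < inv \<sigma> a" using s1[of a b] unfolding S_def by simp
  qed
  have invt: "inv_set n \<tau> = T"
    unfolding inv_set_char[OF tp[unfolded S_def]] T_def
  proof (intro set_eqI iffI; clarify)
    fix a b assume "a \<in> {1..n}" "b \<in> {1..n}" "a < b" "inv \<tau> b < inv \<tau> a"
    then show "a \<in> S \<and> b \<in> S \<and> a < b \<and> (a,b) \<notin> P" using t1[of a b] unfolding S_def by simp
  next
    fix a b assume "a \<in> S" "b \<in> S" "a < b" "(a,b) \<notin> P"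
    then show "a \<in> {1..n} \<and> b \<in> {1..n} \<and> a < b \<and> inv \<tau> b < inv \<tau> a" using t1[of a b] unfolding S_def by simp
  qed
  have fiber: "(\<forall>I\<in>\<I>. Or_perm \<pi> I = A I) = (D \<subseteq> inv_set n \<pi> \<and> inv_set n \<pi> \<subseteq> T)"
    if pp: "\<pi> permutes S" for \<pi>
  proof -
    have ipi: "inv \<pi> permutes S" using permutes_inv[OF pp] .
    have injS: "inv \<pi> a \<noteq> inv \<pi> b" if "a \<noteq> b" for a b
      using permutes_inj[OF ipi] that by (metis injD)
    have "(\<forall>I\<in>\<I>. Or_perm \<pi> I = A I) = (\<forall>I\<in>\<I>. \<forall>x\<in>I - {A I}. inv \<pi> (A I) < inv \<pi> x)"
    proof (rule ball_cong[OF refl])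
      fix I assume "I \<in> \<I>"
      show "(Or_perm \<pi> I = A I) = (\<forall>x\<in>I - {A I}. inv \<pi> (A I) < inv \<pi> x)"
        by (rule Or_perm_char[of \<pi> n I A, OF pp[unfolded S_def] IS[OF \<open>I \<in> \<I>\<close>, unfolded S_def] AI[OF \<open>I \<in> \<I>\<close>]])
    qed
    also have "\<dots> = (\<forall>(a,b)\<in>R. inv \<pi> a < inv \<pi> b)" unfolding R_def Rel_def by blast
    also have "\<dots> = (\<forall>(a,b)\<in>P. inv \<pi> a < inv \<pi> b)"
    proof
      assume h: "\<forall>(a,b)\<in>R. inv \<pi> a < inv \<pi> b"
      show "\<forall>(a,b)\<in>P. inv \<pi> a < inv \<pi> b"
      proof clarify
        fix a b assume "(a,b) \<in> P"
        then show "inv \<pi> a < inv \<pi> b" unfolding P_def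
          by (induction rule: trancl_induct) (use h in auto)
      qed
    qed (auto simp: P_def)
    also have "\<dots> = (D \<subseteq> inv_set n \<pi> \<and> inv_set n \<pi> \<subseteq> T)"
      unfolding inv_set_char[OF pp[unfolded S_def]] D_def T_def
    proof safe
      fix a b assume h: "\<forall>(a,b)\<in>P. inv \<pi> a < inv \<pi> b" "(b,a) \<in> P"
      then show "inv \<pi> b < inv \<pi> a" by auto
    next
      fix a b assume h: "\<forall>(a,b)\<in>P. inv \<pi> a < inv \<pi> b" "inv \<pi> b < inv \<pi> a" "(a,b) \<in> P"
      then show False by auto
    next
      fix a b
      assume h1: "{(a, b). a \<in> S \<and> b \<in> S \<and> a < b \<and> (b, a) \<in> P}
          \<subseteq> {(a, b). a \<in> {1..n} \<and> b \<in> {1..n} \<and> a < b \<and> inv \<pi> b < inv \<pi> a}"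
        and h2: "{(a, b). a \<in> {1..n} \<and> b \<in> {1..n} \<and> a < b \<and> inv \<pi> b < inv \<pi> a}
          \<subseteq> {(a, b). a \<in> S \<and> b \<in> S \<and> a < b \<and> (a, b) \<notin> P}"
        and ab: "(a,b) \<in> P"
      have "a \<in> S" "b \<in> S" "a \<noteq> b" using PS[OF ab] irr ab by auto
      then consider "a < b" | "b < a" by linarith
      then show "inv \<pi> a < inv \<pi> b"
      proof cases
        case 1
        have "inv \<pi> a \<noteq> inv \<pi> b" using injS \<open>a \<noteq> b\<close> by blast
        moreover have "\<not> inv \<pi> b < inv \<pi> a" using h2 1 ab \<open>a \<in> S\<close> \<open>b \<in> S\<close> unfolding S_def by blast
        ultimately show ?thesis by simp
      next
        case 2
        then show ?thesis using h1 ab \<open>a \<in> S\<close> \<open>b \<in> S\<close> unfolding S_def by blast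
      qed
    qed (auto simp: S_def)
    finally show ?thesis .
  qed
  have eq: "{\<pi>. \<pi> permutes {1..n} \<and> (\<forall>I\<in>\<I>. Or_perm \<pi> I = A I)}
             = {\<pi>. \<pi> permutes {1..n} \<and> weak_le n \<sigma> \<pi> \<and> weak_le n \<pi> \<tau>}"
  proof (rule Collect_cong, rule conj_cong[OF refl])
    fix \<pi> assume "\<pi> permutes {1..n}"
    then show "(\<forall>I\<in>\<I>. Or_perm \<pi> I = A I) = (weak_le n \<sigma> \<pi> \<and> weak_le n \<pi> \<tau>)"
      using fiber[of \<pi>] unfolding weak_le_def invs invt S_def by simp
  qed
  have a231: "avoids_231 n \<sigma>"
    unfolding avoids_231_def
  proof clarify
    fix i j k assume h: "1 \<le> i" "i < j" "j < k" "k \<le> n" "\<sigma> k < \<sigma> i" "\<sigma> i < \<sigma> j"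
    have ijk: "i \<in> S" "j \<in> S" "k \<in> S" using h unfolding S_def by auto
    have vS: "\<sigma> i \<in> S" "\<sigma> j \<in> S" "\<sigma> k \<in> S" using ijk permutes_in_image[OF sp] by blast+
    have pos: "inv \<sigma> (\<sigma> x) = x" for x using permutes_inverses(2)[OF sp] by simp
    have "inv \<sigma> (\<sigma> j) < inv \<sigma> (\<sigma> k)" using pos h by simp
    then have "(\<sigma> j, \<sigma> k) \<in> L1" using sL vS by blast
    then have "(\<sigma> j, \<sigma> k) \<in> P" using h unfolding L1_def by auto
    then have "(\<sigma> j, \<sigma> i) \<in> P" using betw[of "\<sigma> j" "\<sigma> k" "\<sigma> i"] h by auto
    moreover have "inv \<sigma> (\<sigma> i) < inv \<sigma> (\<sigma> j)" using pos h by simp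
    then have "(\<sigma> i, \<sigma> j) \<in> L1" using sL vS by blast
    ultimately show False using asy unfolding L1_def by auto
  qed
  have a213: "avoids_213 n \<tau>"
    unfolding avoids_213_def
  proof clarify
    fix i j k assume h: "1 \<le> i" "i < j" "j < k" "k \<le> n" "\<tau> j < \<tau> i" "\<tau> i < \<tau> k"
    have ijk: "i \<in> S" "j \<in> S" "k \<in> S" using h unfolding S_def by auto
    have vS: "\<tau> i \<in> S" "\<tau> j \<in> S" "\<tau> k \<in> S" using ijk permutes_in_image[OF tp] by blast+
    have pos: "inv \<tau> (\<tau> x) = x" for x using permutes_inverses(2)[OF tp] by simp
    have "inv \<tau> (\<tau> j) < inv \<tau> (\<tau> k)" using pos h by simp
    then have "(\<tau> j, \<tau> k) \<in> L2" using tL vS by blast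
    then have "(\<tau> j, \<tau> k) \<in> P" using h unfolding L2_def by auto
    then have "(\<tau> j, \<tau> i) \<in> P" using betw[of "\<tau> j" "\<tau> k" "\<tau> i"] h by auto
    moreover have "inv \<tau> (\<tau> i) < inv \<tau> (\<tau> j)" using pos h by simp
    then have "(\<tau> i, \<tau> j) \<in> L2" using tL vS by blast
    ultimately show False using asy unfolding L2_def by auto
  qed
  show ?thesis using sp tp eq a231 a213 unfolding S_def by blast
qed

end
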